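(* Fix integers $m\geq3$, $1\leq\ell\leq m-1$, and an integer $1\leq j\leq\frac{m+2}{2}$, and regard $d_{\ell,j}(a)$ and $e_j(a)$ as functions of $a=(a_1,\dots,a_{m-1})\in\mathbb C^{m-1}$. Then: (i) $d_{\ell,j}(a)$ and $e_j(a)$ are polynomials in $a_1,\dots,a_j$; (ii) $d_{\ell,j}(a)$ and $e_j(a)$ do not depend on $a_{j+1},\dots,a_{m-1}$; (iii) if $(j-1)\ell$ is a multiple of $m$, then $d_{\ell,j}(a)\equiv0$ and $e_j(a)$ does not depend on $a_j$; (iv) if $(j-1)\ell$ is not a multiple of $m$, then $d_{\ell,j}(a)$ and $e_j(a)$ depend linearly on $a_j$.
   Context: Multi-index notation: $\alpha\in(\mathbb N\cup\{0\})^{m-1}$, $\beta=(1,\dots,m-1)$, $|\alpha|=\sum\alpha_i$, $\alpha!=\prod\alpha_i!$, $a^\alpha=\prod a_i^{\alpha_i}$, $\alpha\cdot\beta=\sum i\alpha_i$; ${x\choose k}$ is the generalized binomial coefficient. For $1\leq k\leq j\leq\frac{m+2}{2}$, $b_{j,k}(a)={\frac12\choose k}\sum_{|\alpha|=k,\,\alpha\cdot\beta=j}\frac{k!}{\alpha!}a^\alpha$. $K_{m,j,k}=-\frac2m$ if $j=k=1$; $K_{m,j,k}=-\frac{2k-1}{m+2-2j}B\left(k-\frac{j-1}{m},\frac12+\frac{j-1}{m}\right)$ if $1\leq k\leq j\leq\frac{m+1}{2}$, $j\neq1$ ($B$ the beta function); $K_{m,j,k}=\frac2m\left(\ln2-\frac11-\frac13-\cdots-\frac1{2k-3}\right)$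 if $m$ is even and $1\leq k\leq j=\frac{m+2}{2}$ (empty sum for $k=1$). $\eta_{m,\ell}(a)=(-1)^{\frac{\ell-1}{2}}\frac{4\pi i}{m}\sum_{k=1}^{\frac{m+2}{2}}b_{\frac{m+2}{2},k}(a)$ if $m$ is even and $\ell$ odd, and $0$ otherwise. $d_{\ell,0}(a)=2i\sqrt\pi\sin\left(\frac{\ell\pi}{m}\right)\frac{\Gamma(1+\frac1m)}{\Gamma(\frac32+\frac1m)}$; for $1\leq j\leq\frac{m+1}{2}$, $d_{\ell,j}(a)=-4i\sum_{k=1}^j(-1)^{(\ell+1)k}K_{m,j,k}b_{j,k}(a)\sin\left(\frac{(j-1)\ell\pi}{m}\right)\cos\left(\frac{(j-1)\pi}{m}\right)$; for $j=\frac{m+2}{2}$ ($m$ even), $d_{\ell,j}(a)=\eta_{m,\ell}(a)$. $e_1(a)=0$ and, for $2\leq j\leq\frac{m+2}{2}$, $e_j(a)=-\frac{2m}{m+2}\Big(\frac{d_{\ell,j}(a)}{d_{\ell,0}(a)}+\sum_{|\alpha|=k\geq2,\ \alpha\cdot\beta=j}{\frac12+\frac1m\choose k}\frac{k!}{\alpha!}e(a)^\alpha+\sum_{r=2}^{j-2}\frac{d_{\ell,r}(a)}{d_{\ell,0}(a)}\sum_{|\alpha|=k,\ \alpha\cdot\beta=j-r}{\frac12+\frac{1-r}{m}\choose k}\frac{k!}{\alpha!}e(a)^\alpha\Big)$, where $e(a)^\alpha=\prod_ie_i(a)^{\alpha_i}$ (only $e_i$ with $i<j$ occur). These $e_j(a)$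 are the coefficients in the asymptotic expansion $\lambda_n=\lambda_{n,0}+\sum_{j=2}^{\lfloor\frac{m+2}{2}\rfloor}e_j(a)\lambda_{n,0}^{1-j/m}+o(\lambda_{n,0}^{1-\frac1m\lfloor\frac{m+2}{2}\rfloor})$ of the eigenvalues of $-u''+[(-1)^\ell(iz)^m-P(iz)]u=\lambda u$, $P(z)=a_1z^{m-1}+\cdots+a_{m-1}z$, with decay along the rays $\arg z=-\frac\pi2\pm\frac{(\ell+1)\pi}{m+2}$. *)

theory Defs
  imports "HOL-Analysis.Analysis"
begin

text \<open>Coefficient vectors a = (a_1,...,a_{m-1}) are represented as functions
  nat => complex; only the values at 1..m-1 are used by the definitions below.\<close>

definition multi_idx :: "nat \<Rightarrow> nat \<Rightarrow> (nat \<Rightarrow> nat) set" where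
  "multi_idx m j = {\<alpha>. (\<forall>i. \<alpha> i \<noteq> 0 \<longrightarrow> i \<in> {1..m-1}) \<and> (\<Sum>i\<in>{1..m-1}. i * \<alpha> i) = j}"

definition abs_idx :: "nat \<Rightarrow> (nat \<Rightarrow> nat) \<Rightarrow> nat" where
  "abs_idx m \<alpha> = (\<Sum>i\<in>{1..m-1}. \<alpha> i)"

definition fact_idx :: "nat \<Rightarrow> (nat \<Rightarrow> nat) \<Rightarrow> complex" where
  "fact_idx m \<alpha> = (\<Prod>i\<in>{1..m-1}. fact (\<alpha> i))"

definition pow_idx :: "nat \<Rightarrow> (nat \<Rightarrow> complex) \<Rightarrow> (nat \<Rightarrow> nat) \<Rightarrow> complex" where
  "pow_idx m a \<alpha> = (\<Prod>i\<in>{1..m-1}. a i ^ \<alpha> i)"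

definition bcoef :: "nat \<Rightarrow> nat \<Rightarrow> nat \<Rightarrow> (nat \<Rightarrow> complex) \<Rightarrow> complex" where
  "bcoef m j k a = ((1/2 :: complex) gchoose k) *
     (\<Sum>\<alpha>\<in>{\<alpha>\<in>multi_idx m j. abs_idx m \<alpha> = k}. fact k / fact_idx m \<alpha> * pow_idx m a \<alpha>)"

text \<open>K_{m,j,k} (value 0 outside the stated ranges, where it is not defined)\<close>
definition Kc :: "nat \<Rightarrow> nat \<Rightarrow> nat \<Rightarrow> real" where
  "Kc m j k =
    (if j = 1 \<and> k = 1 then - 2 / real m
     else if 1 \<le> k \<and> k \<le> j \<and> 2 * j \<le> m + 1 \<and> j \<noteq> 1 then
       - (2 * real k - 1) / (real m + 2 - 2 * real j) *
         Beta (real k - (real j - 1) / real m) (1/2 + (real j - 1) / real m)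
     else if even m \<and> 1 \<le> k \<and> k \<le> j \<and> 2 * j = m + 2 then
       2 / real m * (ln 2 - (\<Sum>i\<in>{1..<k}. 1 / (2 * real i - 1)))
     else 0)"

definition eta :: "nat \<Rightarrow> nat \<Rightarrow> (nat \<Rightarrow> complex) \<Rightarrow> complex" where
  "eta m l a = (if even m \<and> odd l then
     (-1) ^ ((l - 1) div 2) * (4 * of_real pi * \<i> / of_nat m) *
       (\<Sum>k\<in>{1..(m+2) div 2}. bcoef m ((m+2) div 2) k a)
     else 0)"

text \<open>d_{l,j}(a) (value 0 outside 0 <= j <= (m+2)/2)\<close>
definition dcoef :: "nat \<Rightarrow> nat \<Rightarrow> nat \<Rightarrow> (nat \<Rightarrow> complex) \<Rightarrow> complex" where
  "dcoef m l j a =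
    (if j = 0 then
       2 * \<i> * of_real (sqrt pi) * of_real (sin (real l * pi / real m)) *
         of_real (Gamma (1 + 1 / real m) / Gamma (3/2 + 1 / real m))
     else if 2 * j \<le> m + 1 then
       - 4 * \<i> * (\<Sum>k\<in>{1..j}. (-1) ^ ((l + 1) * k) * of_real (Kc m j k) * bcoef m j k a *
          of_real (sin ((real j - 1) * real l * pi / real m)) *
          of_real (cos ((real j - 1) * pi / real m)))
     else if even m \<and> 2 * j = m + 2 then eta m l a
     else 0)"

text \<open>One step of the recursion for e_j, given the previously computed values f i = e_i(a), i < j.\<close>
definition estep :: "nat \<Rightarrow> nat \<Rightarrow> (nat \<Rightarrow> complex) \<Rightarrow> (nat \<Rightarrow> complex) \<Rightarrow> nat \<Rightarrow> complex" where
  "estep m l a f j =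
    (if j < 2 then 0 else
      - (2 * of_nat m / (of_nat m + 2)) *
        (dcoef m l j a / dcoef m l 0 a
         + (\<Sum>\<alpha>\<in>{\<alpha>\<in>multi_idx m j. 2 \<le> abs_idx m \<alpha>}.
              ((1/2 + 1 / of_nat m :: complex) gchoose (abs_idx m \<alpha>)) *
              fact (abs_idx m \<alpha>) / fact_idx m \<alpha> * pow_idx m f \<alpha>)
         + (\<Sum>r\<in>{2..j-2}. dcoef m l r a / dcoef m l 0 a *
              (\<Sum>\<alpha>\<in>multi_idx m (j - r).
                 ((1/2 + (1 - of_nat r) / of_nat m :: complex) gchoose (abs_idx m \<alpha>)) *
                 fact (abs_idx m \<alpha>) / fact_idx m \<alpha> * pow_idx m f \<alpha>))))"

primrec etab :: "nat \<Rightarrow> nat \<Rightarrow> (nat \<Rightarrow> complex) \<Rightarrow> nat \<Rightarrow> (nat \<Rightarrow> complex)" where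
  "etab m l a 0 = (\<lambda>i. 0)"
| "etab m l a (Suc n) = (etab m l a n)(Suc n := estep m l a (etab m l a n) (Suc n))"

definition ecoef :: "nat \<Rightarrow> nat \<Rightarrow> nat \<Rightarrow> (nat \<Rightarrow> complex) \<Rightarrow> complex" where
  "ecoef m l j a = etab m l a j j"

definition poly_in :: "nat set \<Rightarrow> ((nat \<Rightarrow> complex) \<Rightarrow> complex) \<Rightarrow> bool" where
  "poly_in S f \<longleftrightarrow> (\<exists>A c. finite A \<and> (\<forall>\<alpha>\<in>A. \<forall>i. \<alpha> i \<noteq> 0 \<longrightarrow> i \<in> S) \<and>
      (\<forall>a. f a = (\<Sum>\<alpha>\<in>A. c \<alpha> * (\<Prod>i\<in>S. a i ^ \<alpha> i))))"

definition indep_of :: "nat \<Rightarrow> ((nat \<Rightarrow> complex) \<Rightarrow> complex) \<Rightarrow> bool" where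
  "indep_of i f \<longleftrightarrow> (\<forall>a z. f (a(i := z)) = f a)"

definition lin_in :: "nat \<Rightarrow> ((nat \<Rightarrow> complex) \<Rightarrow> complex) \<Rightarrow> bool" where
  "lin_in i f \<longleftrightarrow> (\<exists>c g. c \<noteq> 0 \<and> indep_of i g \<and> (\<forall>a. f a = c * a i + g a))"

end

theory Submission
  imports Defs
begin


lemma poly_in_gen:
  fixes X :: "'x set"
  assumes "finite X" "\<forall>x\<in>X. \<forall>i. p x i \<noteq> 0 \<longrightarrow> i \<in> S"
    "\<forall>a. f a = (\<Sum>x\<in>X. c x * (\<Prod>i\<in>S. a i ^ p x i))"
  shows "poly_in S f"
  unfolding poly_in_def
proof (intro exI conjI)
  show "finite (p ` X)" using assms(1) by simp
  show "\<forall>\<alpha>\<in>p ` X. \<forall>i. \<alpha> i \<noteq> 0 \<longrightarrow> i \<in> S" using assms(2) by auto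
  show "\<forall>a. f a = (\<Sum>\<alpha>\<in>p ` X. (\<Sum>x\<in>{x\<in>X. p x = \<alpha>}. c x) * (\<Prod>i\<in>S. a i ^ \<alpha> i))"
  proof
    fix a
    have "f a = (\<Sum>x\<in>X. c x * (\<Prod>i\<in>S. a i ^ p x i))" using assms(3) by auto
    also have "\<dots> = (\<Sum>\<alpha>\<in>p ` X. \<Sum>x\<in>{x\<in>X. p x = \<alpha>}. c x * (\<Prod>i\<in>S. a i ^ p x i))"
      by (rule sum.image_gen[OF assms(1)])
    also have "\<dots> = (\<Sum>\<alpha>\<in>p ` X. (\<Sum>x\<in>{x\<in>X. p x = \<alpha>}. c x) * (\<Prod>i\<in>S. a i ^ \<alpha> i))"
      by (rule sum.cong[OF refl]) (simp add: sum_distrib_right)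
    finally show "f a = \<dots>" .
  qed
qed

lemma poly_in_const: "poly_in S (\<lambda>a. c)"
  by (rule poly_in_gen[where X="{()}" and p="\<lambda>_ _. 0" and c="\<lambda>_. c"]) auto

lemma poly_in_var:
  assumes "finite S" "i \<in> S" shows "poly_in S (\<lambda>a. a i)"
proof (rule poly_in_gen[where X="{()}" and p="\<lambda>_ k. if k = i then 1 else 0" and c="\<lambda>_. 1"])
  show "\<forall>a::nat\<Rightarrow>complex. a i = (\<Sum>x\<in>{()}. 1 * (\<Prod>k\<in>S. a k ^ (if k = i then 1 else 0)))"
  proof
    fix a :: "nat \<Rightarrow> complex"
    have "(\<Prod>k\<in>S. a k ^ (if k = i then 1 else 0)) = (\<Prod>k\<in>S. if k = i then a k else 1)"
      by (rule prod.cong) auto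
    also have "\<dots> = a i" using assms by (simp add: prod.delta)
    finally show "a i = (\<Sum>x\<in>{()}. 1 * (\<Prod>k\<in>S. a k ^ (if k = i then 1 else 0)))" by simp
  qed
qed (use assms in auto)

lemma poly_in_add:
  assumes "poly_in S f" "poly_in S g" shows "poly_in S (\<lambda>a. f a + g a)"
proof -
  obtain A c where A: "finite A" "\<forall>\<alpha>\<in>A. \<forall>i. \<alpha> i \<noteq> 0 \<longrightarrow> i \<in> S"
    "\<forall>a. f a = (\<Sum>\<alpha>\<in>A. c \<alpha> * (\<Prod>i\<in>S. a i ^ \<alpha> i))" using assms(1) unfolding poly_in_def by blast
  obtain B d where B: "finite B" "\<forall>\<alpha>\<in>B. \<forall>i. \<alpha> i \<noteq> 0 \<longrightarrow> i \<in> S"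
    "\<forall>a. g a = (\<Sum>\<alpha>\<in>B. d \<alpha> * (\<Prod>i\<in>S. a i ^ \<alpha> i))" using assms(2) unfolding poly_in_def by blast
  show ?thesis
    by (rule poly_in_gen[where X="A <+> B" and p="case_sum id id" and c="case_sum c d"])
      (use A B in \<open>auto simp: sum.Plus o_def\<close>)
qed

lemma poly_in_mult:
  assumes "poly_in S f" "poly_in S g" shows "poly_in S (\<lambda>a. f a * g a)"
proof -
  obtain A c where A: "finite A" "\<forall>\<alpha>\<in>A. \<forall>i. \<alpha> i \<noteq> 0 \<longrightarrow> i \<in> S"
    "\<forall>a. f a = (\<Sum>\<alpha>\<in>A. c \<alpha> * (\<Prod>i\<in>S. a i ^ \<alpha> i))" using assms(1) unfolding poly_in_def by blast
  obtain B d where B: "finite B" "\<forall>\<alpha>\<in>B. \<forall>i. \<alpha> i \<noteq> 0 \<longrightarrow> i \<in> S"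
    "\<forall>a. g a = (\<Sum>\<alpha>\<in>B. d \<alpha> * (\<Prod>i\<in>S. a i ^ \<alpha> i))" using assms(2) unfolding poly_in_def by blast
  show ?thesis
  proof (rule poly_in_gen[where X="A \<times> B" and p="\<lambda>(\<alpha>,\<beta>) i. \<alpha> i + \<beta> i" and c="\<lambda>(\<alpha>,\<beta>). c \<alpha> * d \<beta>"])
    show "\<forall>a. f a * g a = (\<Sum>x\<in>A \<times> B. (case x of (\<alpha>, \<beta>) \<Rightarrow> c \<alpha> * d \<beta>) *
        (\<Prod>i\<in>S. a i ^ (case x of (\<alpha>, \<beta>) \<Rightarrow> \<lambda>i. \<alpha> i + \<beta> i) i))"
      using A(3) B(3)
      by (auto simp: sum_product sum.cartesian_product power_add prod.distrib mult_ac intro!: sum.cong)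
  qed (use A B in auto)
qed

lemma poly_in_sum:
  assumes "\<And>x. x \<in> X \<Longrightarrow> poly_in S (F x)" shows "poly_in S (\<lambda>a. \<Sum>x\<in>X. F x a)"
proof (cases "finite X")
  case True then show ?thesis using assms
    by (induction X rule: finite_induct) (auto intro: poly_in_add poly_in_const)
qed (simp add: poly_in_const)

lemma poly_in_prod:
  assumes "\<And>x. x \<in> X \<Longrightarrow> poly_in S (F x)" shows "poly_in S (\<lambda>a. \<Prod>x\<in>X. F x a)"
proof (cases "finite X")
  case True then show ?thesis using assms
    by (induction X rule: finite_induct) (auto intro: poly_in_mult poly_in_const)
qed (simp add: poly_in_const)

lemma poly_in_pow:
  assumes "poly_in S f" shows "poly_in S (\<lambda>a. f a ^ n)"
  by (induction n) (auto intro: poly_in_mult poly_in_const assms)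

lemma poly_in_mono:
  assumes "poly_in S f" "finite T" "S \<subseteq> T" shows "poly_in T f"
proof -
  obtain A c where A: "finite A" "\<forall>\<alpha>\<in>A. \<forall>i. \<alpha> i \<noteq> 0 \<longrightarrow> i \<in> S"
    "\<forall>a. f a = (\<Sum>\<alpha>\<in>A. c \<alpha> * (\<Prod>i\<in>S. a i ^ \<alpha> i))" using assms(1) unfolding poly_in_def by blast
  have "(\<Prod>i\<in>S. a i ^ \<alpha> i) = (\<Prod>i\<in>T. a i ^ \<alpha> i)" if "\<alpha> \<in> A" for a :: "nat \<Rightarrow> complex" and \<alpha>
    by (rule prod.mono_neutral_left[OF assms(2,3)]) (use A(2) that in force)
  then show ?thesis unfolding poly_in_def using A assms(3)
    by (intro exI[of _ A] exI[of _ c]) (auto intro!: sum.cong simp del: prod_constant)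
qed

lemma poly_in_indep:
  assumes "poly_in S f" "i \<notin> S" shows "indep_of i f"
proof -
  obtain A c where A: "finite A" "\<forall>\<alpha>\<in>A. \<forall>i. \<alpha> i \<noteq> 0 \<longrightarrow> i \<in> S"
    "\<forall>a. f a = (\<Sum>\<alpha>\<in>A. c \<alpha> * (\<Prod>i\<in>S. a i ^ \<alpha> i))" using assms(1) unfolding poly_in_def by blast
  show ?thesis unfolding indep_of_def
  proof (intro allI)
    fix a :: "nat \<Rightarrow> complex" and z
    have "(\<Prod>k\<in>S. (a(i:=z)) k ^ \<alpha> k) = (\<Prod>k\<in>S. a k ^ \<alpha> k)" for \<alpha>
      by (rule prod.cong) (use assms(2) in auto)
    then show "f (a(i := z)) = f a" using A(3) by simp
  qed
qed



lemma poly_in_cmult: "poly_in S f \<Longrightarrow> poly_in S (\<lambda>a. c * f a)"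
  by (rule poly_in_mult[OF poly_in_const])

lemma poly_in_divc: "poly_in S f \<Longrightarrow> poly_in S (\<lambda>a. f a / c)"
  using poly_in_mult[OF _ poly_in_const, of S f "inverse c"] by (simp add: divide_inverse)

lemma poly_in_multc: "poly_in S f \<Longrightarrow> poly_in S (\<lambda>a. f a * c)"
  by (rule poly_in_mult[OF _ poly_in_const])

lemma multi_idx_supp:
  assumes "\<alpha> \<in> multi_idx m r" "\<alpha> i \<noteq> 0" shows "i \<in> {1..m-1}" "i \<le> r"
proof -
  show i: "i \<in> {1..m-1}" using assms unfolding multi_idx_def by auto
  have "i \<le> i * \<alpha> i" using assms(2) by simp
  also have "\<dots> \<le> (\<Sum>k\<in>{1..m-1}. k * \<alpha> k)" by (rule member_le_sum[OF i]) auto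
  also have "\<dots> = r" using assms(1) unfolding multi_idx_def by simp
  finally show "i \<le> r" .
qed

lemma pow_idx_poly:
  assumes "\<And>i. i \<in> {1..m-1} \<Longrightarrow> \<alpha> i \<noteq> 0 \<Longrightarrow> poly_in S (E i)"
  shows "poly_in S (\<lambda>a. pow_idx m (\<lambda>i. E i a) \<alpha>)"
  unfolding pow_idx_def
proof (rule poly_in_prod)
  fix i assume i: "i \<in> {1..m-1}"
  show "poly_in S (\<lambda>a. E i a ^ \<alpha> i)"
  proof (cases "\<alpha> i = 0")
    case True then show ?thesis by (simp add: poly_in_const)
  qed (use assms i in \<open>auto intro: poly_in_pow\<close>)
qed

lemma bcoef_poly: "poly_in {1..r} (bcoef m r k)"
proof -
  have "poly_in {1..r} (\<lambda>a. pow_idx m (\<lambda>i. a i) \<alpha>)" if "\<alpha> \<in> multi_idx m r" for \<alpha>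
    by (rule pow_idx_poly) (use multi_idx_supp[OF that] in \<open>auto intro!: poly_in_var\<close>)
  then show ?thesis unfolding bcoef_def
    by (intro poly_in_cmult poly_in_sum) (simp add: mult.assoc)
qed

definition D0 :: "nat \<Rightarrow> nat \<Rightarrow> complex" where
  "D0 m l = 2 * \<i> * of_real (sqrt pi) * of_real (sin (real l * pi / real m)) *
         of_real (Gamma (1 + 1 / real m) / Gamma (3/2 + 1 / real m))"

lemma dcoef0: "dcoef m l 0 a = D0 m l" unfolding dcoef_def D0_def by simp

lemma D0_nz: assumes "1 \<le> l" "l < m" shows "D0 m l \<noteq> 0"
proof -
  have m: "real m > 0" using assms by simp
  have "sin (real l * pi / real m) > 0"
    by (rule sin_gt_zero) (use assms m in \<open>auto simp: field_simps\<close>)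
  moreover have "Gamma (1 + 1 / real m) > 0" "Gamma (3/2 + 1 / real m) > 0"
    using m by (auto intro!: Gamma_real_pos add_pos_nonneg)
  ultimately show ?thesis unfolding D0_def by simp
qed

lemma dcoef_poly: "poly_in {1..r} (dcoef m l r)"
proof -
  consider "r = 0" | "r \<noteq> 0" "2 * r \<le> m + 1" | "r \<noteq> 0" "\<not> 2 * r \<le> m + 1" "even m \<and> 2 * r = m + 2"
    | "r \<noteq> 0" "\<not> 2 * r \<le> m + 1" "\<not> (even m \<and> 2 * r = m + 2)" by blast
  then show ?thesis
  proof cases
    case 1 then show ?thesis unfolding dcoef_def by (simp add: poly_in_const)
  next
    case 2
    have eq: "dcoef m l r = (\<lambda>a. - 4 * \<i> * (\<Sum>k\<in>{1..r}. (-1) ^ ((l + 1) * k) * of_real (Kc m r k) * bcoef m r k a *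
          of_real (sin ((real r - 1) * real l * pi / real m)) *
          of_real (cos ((real r - 1) * pi / real m))))"
      unfolding dcoef_def by (intro ext) (simp only: if_not_P[OF 2(1)] if_P[OF 2(2)] if_True if_False)
    show ?thesis unfolding eq
      by (intro poly_in_cmult poly_in_sum, (rule poly_in_multc)+, rule poly_in_cmult, rule bcoef_poly)
  next
    case 3
    then have r: "(m + 2) div 2 = r" by presburger
    have e1: "dcoef m l r = (\<lambda>a. (-1) ^ ((l - 1) div 2) * (4 * of_real pi * \<i> / of_nat m) *
       (\<Sum>k\<in>{1..r}. bcoef m r k a))" if "odd l"
      unfolding dcoef_def eta_def r using 3 that by (intro ext) (simp only: if_not_P[OF 3(1)] if_not_P[OF 3(2)] if_P[OF 3(3)] if_True if_False simp_thms)
    have e2: "dcoef m l r = (\<lambda>a. 0)" if "even l"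
      unfolding dcoef_def eta_def r using 3 that by (intro ext) (simp only: if_not_P[OF 3(1)] if_not_P[OF 3(2)] if_P[OF 3(3)] if_True if_False simp_thms)
    show ?thesis
    proof (cases "odd l")
      case True show ?thesis unfolding e1[OF True] by (intro poly_in_cmult poly_in_sum bcoef_poly)
    next
      case False show ?thesis using e2 False by (simp add: poly_in_const)
    qed
  next
    case 4
    then have "dcoef m l r = (\<lambda>a. 0)" by (auto simp: dcoef_def fun_eq_iff)
    then show ?thesis by (simp add: poly_in_const)
  qed
qed

lemma single_idx:
  assumes "\<alpha> \<in> multi_idx m j" "\<alpha> j \<noteq> 0" shows "abs_idx m \<alpha> = 1"
proof -
  let ?S = "{1..m-1}"
  have j: "j \<in> ?S" using multi_idx_supp[OF assms] by simp
  have "j = (\<Sum>k\<in>?S. k * \<alpha> k)" using assms(1) unfolding multi_idx_def by simp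
  also have "\<dots> = j * \<alpha> j + (\<Sum>k\<in>?S-{j}. k * \<alpha> k)" by (rule sum.remove[OF _ j]) simp
  finally have e: "j = j * \<alpha> j + (\<Sum>k\<in>?S-{j}. k * \<alpha> k)" .
  have "j * \<alpha> j \<ge> j" using assms(2) by simp
  moreover have "j * \<alpha> j \<le> j" using e by linarith
  ultimately have jj: "j * \<alpha> j = j * 1" by linarith
  then have aj: "\<alpha> j = 1" using j by (simp only: mult_cancel_left) simp
  have r: "(\<Sum>k\<in>?S-{j}. k * \<alpha> k) = 0" using e jj by linarith
  from r have "\<forall>k\<in>?S-{j}. \<alpha> k = 0" by simp
  then have "(\<Sum>k\<in>?S-{j}. \<alpha> k) = 0" by simp
  moreover have "abs_idx m \<alpha> = \<alpha> j + (\<Sum>k\<in>?S-{j}. \<alpha> k)" unfolding abs_idx_def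
    by (rule sum.remove[OF _ j]) simp
  ultimately show ?thesis using aj by simp
qed

lemma bcoef_indep: assumes "2 \<le> k" shows "bcoef m j k (a(j:=z)) = bcoef m j k a"
proof -
  have "pow_idx m (a(j:=z)) \<alpha> = pow_idx m a \<alpha>" if \<alpha>: "\<alpha> \<in> {\<alpha> \<in> multi_idx m j. abs_idx m \<alpha> = k}" for \<alpha>
    unfolding pow_idx_def
  proof (rule prod.cong[OF refl])
    fix i
    show "(a(j := z)) i ^ \<alpha> i = a i ^ \<alpha> i"
    proof (cases "i = j")
      case True
      then have "\<alpha> i = 0" using single_idx[of \<alpha> m j] \<alpha> assms by auto
      then show ?thesis by simp
    qed simp
  qed
  then have "(\<Sum>\<alpha>\<in>{\<alpha> \<in> multi_idx m j. abs_idx m \<alpha> = k}. fact k / fact_idx m \<alpha> * pow_idx m (a(j:=z)) \<alpha>)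
     = (\<Sum>\<alpha>\<in>{\<alpha> \<in> multi_idx m j. abs_idx m \<alpha> = k}. fact k / fact_idx m \<alpha> * pow_idx m a \<alpha>)"
    by (intro sum.cong) auto
  then show ?thesis unfolding bcoef_def by simp
qed

lemma bcoef1: assumes "1 \<le> j" "j \<le> m - 1" shows "bcoef m j 1 a = a j / 2"
proof -
  let ?S = "{1..m-1}"
  define \<delta> where "\<delta> = (\<lambda>i::nat. if i = j then 1 else (0::nat))"
  have j: "j \<in> ?S" using assms by simp
  have set: "{\<alpha> \<in> multi_idx m j. abs_idx m \<alpha> = 1} = {\<delta>}"
  proof (intro equalityI subsetI)
    fix \<alpha> assume "\<alpha> \<in> {\<alpha> \<in> multi_idx m j. abs_idx m \<alpha> = 1}"
    then have a: "\<alpha> \<in> multi_idx m j" "(\<Sum>k\<in>?S. \<alpha> k) = 1" unfolding abs_idx_def by auto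
    have "\<exists>i0\<in>?S. \<alpha> i0 = 1 \<and> (\<forall>b\<in>?S. i0 \<noteq> b \<longrightarrow> \<alpha> b = 0)"
      using sum_eq_1_iff[of ?S \<alpha>] a(2) by simp
    then obtain i0 where i0: "i0 \<in> ?S" "\<alpha> i0 = 1" "\<forall>b\<in>?S. i0 \<noteq> b \<longrightarrow> \<alpha> b = 0"
      by blast
    have sup: "\<forall>i. \<alpha> i \<noteq> 0 \<longrightarrow> i \<in> ?S" using a(1) unfolding multi_idx_def by blast
    have aeq: "\<alpha> = (\<lambda>i. if i = i0 then 1 else 0)"
    proof
      fix i show "\<alpha> i = (if i = i0 then 1 else 0)"
      proof (cases "i \<in> ?S")
        case True then show ?thesis using i0 by (cases "i = i0") auto
      next
        case False then show ?thesis using sup i0(1) by (metis (full_types))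
      qed
    qed
    have "j = (\<Sum>k\<in>?S. k * \<alpha> k)" using a(1) unfolding multi_idx_def by simp
    also have "\<dots> = (\<Sum>k\<in>?S. if k = i0 then k else 0)" by (rule sum.cong) (auto simp: aeq)
    also have "\<dots> = i0" using i0(1) by simp
    finally show "\<alpha> \<in> {\<delta>}" using aeq \<delta>_def by simp
  next
    fix \<alpha> assume "\<alpha> \<in> {\<delta>}"
    then have a: "\<alpha> = \<delta>" by simp
    have "(\<Sum>k\<in>?S. k * \<delta> k) = (\<Sum>k\<in>?S. if k = j then k else 0)" by (rule sum.cong) (auto simp: \<delta>_def)
    also have "\<dots> = j" using j by simp
    finally have 1: "(\<Sum>k\<in>?S. k * \<delta> k) = j" .
    have "(\<Sum>k\<in>?S. \<delta> k) = (\<Sum>k\<in>?S. if k = j then 1 else 0)" by (rule sum.cong) (auto simp: \<delta>_def)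
    also have "\<dots> = 1" using j by simp
    finally have 2: "(\<Sum>k\<in>?S. \<delta> k) = 1" .
    show "\<alpha> \<in> {\<alpha> \<in> multi_idx m j. abs_idx m \<alpha> = 1}" using 1 2 a j
      unfolding multi_idx_def abs_idx_def by (auto simp: \<delta>_def)
  qed
  have f: "fact_idx m \<delta> = 1" unfolding fact_idx_def by (rule prod.neutral) (auto simp: \<delta>_def)
  have "pow_idx m a \<delta> = (\<Prod>k\<in>?S. if k = j then a k else 1)" unfolding pow_idx_def
    by (rule prod.cong) (auto simp: \<delta>_def)
  also have "\<dots> = a j" using j by simp
  finally have p: "pow_idx m a \<delta> = a j" .
  show ?thesis unfolding bcoef_def set using f p by simp
qed



lemma Kc_nz: assumes "2 \<le> j" "2 * j \<le> m + 1" shows "Kc m j 1 \<noteq> 0"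
proof -
  have m: "real m \<ge> 3" using assms by simp
  have lt: "(real j - 1) / real m < 1" using assms by (simp add: field_simps)
  have ge: "(real j - 1) / real m \<ge> 0" using assms by simp
  have B: "Beta (1 - (real j - 1) / real m) (1/2 + (real j - 1) / real m) > 0"
    unfolding Beta_def using lt ge by (intro divide_pos_pos mult_pos_pos Gamma_real_pos) auto
  have d: "real m + 2 - 2 * real j > 0" using assms by linarith
  have "Kc m j 1 = - (2 * 1 - 1) / (real m + 2 - 2 * real j) *
         Beta (1 - (real j - 1) / real m) (1/2 + (real j - 1) / real m)"
    unfolding Kc_def using assms by simp
  then show ?thesis using B d by simp
qed

lemma real_jl: assumes "1 \<le> j" "(j - 1) * l = m * q" "m > 0"
  shows "(real j - 1) * real l * pi / real m = real q * pi"
proof -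
  have "(real j - 1) * real l = real ((j - 1) * l)" using assms(1) by (simp add: of_nat_diff)
  also have "\<dots> = real m * real q" using assms(2) by simp
  finally show ?thesis using assms(3) by (simp add: field_simps)
qed

lemma dcoef_dvd:
  assumes "m \<ge> 3" "1 \<le> j" "2 * j \<le> m + 2" "m dvd (j - 1) * l"
  shows "dcoef m l j a = 0"
proof (cases "2 * j \<le> m + 1")
  case True
  obtain q where q: "(j - 1) * l = m * q" using assms(4) by (auto elim: dvdE)
  have "sin ((real j - 1) * real l * pi / real m) = 0" using real_jl[OF assms(2) q] assms(1) by simp
  then show ?thesis using True assms(2) unfolding dcoef_def by simp
next
  case False
  then have e1: "2 * j = m + 2" using assms by auto
  then have e: "2 * j = m + 2" "even m" by presburger+
  then obtain h where h0: "m = 2 * h" by (auto elim: evenE)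
  with e have h: "m = 2 * h" "j - 1 = h" by auto
  obtain q where q: "(j - 1) * l = m * q" using assms(4) by (auto elim: dvdE)
  then have "h * l = h * (2 * q)" using h by (simp add: mult_ac)
  moreover have "h > 0" using h assms by simp
  ultimately have "l = 2 * q" by simp
  then have "\<not> odd l" by simp
  then show ?thesis using False e assms(2) unfolding dcoef_def eta_def by simp
qed

lemma sin_nz: assumes "\<not> m dvd (j - 1) * l" "1 \<le> j" "m > 0"
  shows "sin ((real j - 1) * real l * pi / real m) \<noteq> 0"
proof
  assume "sin ((real j - 1) * real l * pi / real m) = 0"
  then obtain i :: int where i: "(real j - 1) * real l * pi / real m = of_int i * pi"
    using sin_zero_iff_int2 by blast
  have "(real j - 1) * real l = real ((j - 1) * l)" using assms(2) by (simp add: of_nat_diff)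
  with i have "real ((j - 1) * l) = real m * of_int i" using assms(3)
    by (simp add: field_simps)
  then have "real_of_int (int ((j - 1) * l)) = real_of_int (int m * i)" by simp
  then have "int ((j - 1) * l) = int m * i" by (simp only: of_int_eq_iff)
  then have "int m dvd int ((j - 1) * l)" by simp
  then show False using assms(1) by (simp only: int_dvd_int_iff)
qed

lemma dcoef_lin:
  assumes "m \<ge> 3" "1 \<le> j" "2 * j \<le> m + 2" "\<not> m dvd (j - 1) * l"
  shows "lin_in j (dcoef m l j)"
proof -
  have j2: "2 \<le> j" using assms by (cases "j = 1") auto
  have jm: "j \<le> m - 1" using assms by linarith
  show ?thesis
  proof (cases "2 * j \<le> m + 1")
    case True
    define sn where "sn = sin ((real j - 1) * real l * pi / real m)"
    define cs where "cs = cos ((real j - 1) * pi / real m)"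
    define T where "T = (\<lambda>k a. (-1) ^ ((l + 1) * k) * of_real (Kc m j k) * bcoef m j k a *
          of_real sn * (of_real cs :: complex))"
    have sn: "sn \<noteq> 0" unfolding sn_def using sin_nz[OF assms(4,2)] assms(1) by simp
    have cs: "cs > 0" unfolding cs_def
    proof (rule cos_gt_zero_pi)
      have "(real j - 1) * pi / real m \<ge> 0" using assms by simp
      then show "- (pi / 2) < (real j - 1) * pi / real m" using pi_gt_zero by linarith
      have "real (2 * j) \<le> real (m + 1)" using True by (simp only: of_nat_le_iff)
      then have "2 * (real j - 1) < real m" by simp
      then have "(real j - 1) / real m < 1 / 2" using assms(1) by (simp add: field_simps)
      then have "(real j - 1) / real m * pi < 1 / 2 * pi" using pi_gt_zero by (intro mult_strict_right_mono) auto
      then show "(real j - 1) * pi / real m < pi / 2" by simp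
    qed
    have K: "Kc m j 1 \<noteq> 0" by (rule Kc_nz[OF j2 True])
    define c where "c = - 4 * \<i> * ((-1) ^ ((l + 1) * 1) * of_real (Kc m j 1) * (1/2) * of_real sn * (of_real cs :: complex))"
    define g where "g = (\<lambda>a. - 4 * \<i> * (\<Sum>k\<in>{2..j}. T k a))"
    have eq: "dcoef m l j a = c * a j + g a" for a
    proof -
      have "dcoef m l j a = - 4 * \<i> * (\<Sum>k\<in>{1..j}. T k a)"
        unfolding dcoef_def T_def sn_def cs_def using True assms(2) by simp
      also have "(\<Sum>k\<in>{1..j}. T k a) = T 1 a + (\<Sum>k\<in>{Suc 1..j}. T k a)"
        by (rule sum.atLeast_Suc_atMost) (use assms in simp)
      also have "T 1 a = (-1) ^ ((l + 1) * 1) * of_real (Kc m j 1) * (1/2) * of_real sn * of_real cs * a j"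
        unfolding T_def bcoef1[OF assms(2) jm] by simp
      finally show ?thesis unfolding c_def g_def by (simp add: algebra_simps numeral_2_eq_2)
    qed
    have "c \<noteq> 0" unfolding c_def using sn cs K by simp
    moreover have "indep_of j g" unfolding indep_of_def g_def T_def
      by (auto intro!: sum.cong simp: bcoef_indep)
    ultimately show ?thesis unfolding lin_in_def using eq by blast
  next
    case False
    then have e1: "2 * j = m + 2" using assms by auto
    then have ev: "even m" by presburger
    then obtain h where h0: "m = 2 * h" by (auto elim: evenE)
    with e1 have h: "m = 2 * h" "j - 1 = h" by auto
    have "odd l"
    proof
      assume "even l"
      then obtain q where "l = 2 * q" by (auto elim: evenE)
      then have "(j - 1) * l = m * q" using h by simp
      then show False using assms(4) by simp
    qed
    have r: "(m + 2) div 2 = j" using e1 by presburger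
    define C where "C = (-1) ^ ((l - 1) div 2) * (4 * of_real pi * \<i> / (of_nat m :: complex))"
    define c where "c = C * (1/2)"
    define g where "g = (\<lambda>a. C * (\<Sum>k\<in>{2..j}. bcoef m j k a))"
    have eq: "dcoef m l j a = c * a j + g a" for a
    proof -
      have "dcoef m l j a = C * (\<Sum>k\<in>{1..j}. bcoef m j k a)"
        unfolding dcoef_def eta_def C_def r using False ev \<open>odd l\<close> assms(2) e1 by simp
      also have "(\<Sum>k\<in>{1..j}. bcoef m j k a) = bcoef m j 1 a + (\<Sum>k\<in>{Suc 1..j}. bcoef m j k a)"
        by (rule sum.atLeast_Suc_atMost) (use assms in simp)
      also have "bcoef m j 1 a = a j / 2" by (rule bcoef1[OF assms(2) jm])
      finally show ?thesis unfolding c_def g_def by (simp add: algebra_simps numeral_2_eq_2)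
    qed
    have "c \<noteq> 0" unfolding c_def C_def using assms(1) by simp
    moreover have "indep_of j g" unfolding indep_of_def g_def
      by (auto intro!: sum.cong simp: bcoef_indep)
    ultimately show ?thesis unfolding lin_in_def using eq by blast
  qed
qed



lemma etab_le: "i \<le> n \<Longrightarrow> etab m l a n i = ecoef m l i a"
proof (induction n)
  case 0 then show ?case by (simp add: ecoef_def)
next
  case (Suc n)
  show ?case
  proof (cases "i = Suc n")
    case True then show ?thesis by (simp add: ecoef_def)
  next
    case False then show ?thesis using Suc by simp
  qed
qed

lemma ecoef_small: "j < 2 \<Longrightarrow> ecoef m l j a = 0"
proof -
  assume "j < 2" then have "j = 0 \<or> j = 1" by auto
  then show ?thesis by (elim disjE) (simp_all add: ecoef_def estep_def)
qed

lemma pow_etab: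
  assumes "\<And>i. \<alpha> i \<noteq> 0 \<Longrightarrow> i \<le> n"
  shows "pow_idx m (etab m l a n) \<alpha> = pow_idx m (\<lambda>i. ecoef m l i a) \<alpha>"
  unfolding pow_idx_def
proof (rule prod.cong[OF refl])
  fix i show "etab m l a n i ^ \<alpha> i = ecoef m l i a ^ \<alpha> i"
    by (cases "\<alpha> i = 0") (auto simp: assms etab_le)
qed

lemma supp1: assumes "\<alpha> \<in> multi_idx m j" "2 \<le> abs_idx m \<alpha>" "\<alpha> i \<noteq> 0" shows "i \<le> j - 1"
proof -
  have "i \<le> j" using multi_idx_supp[OF assms(1,3)] by simp
  moreover have "i \<noteq> j" using single_idx[OF assms(1)] assms(2,3) by auto
  ultimately show ?thesis by simp
qed

lemma supp2: assumes "\<alpha> \<in> multi_idx m (j - r)" "2 \<le> r" "\<alpha> i \<noteq> 0" shows "i \<le> j - 1"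
  using multi_idx_supp[OF assms(1,3)] assms(2) by simp

definition Rt :: "nat \<Rightarrow> nat \<Rightarrow> nat \<Rightarrow> (nat \<Rightarrow> complex) \<Rightarrow> complex" where
  "Rt m l j a =
    (\<Sum>\<alpha>\<in>{\<alpha>\<in>multi_idx m j. 2 \<le> abs_idx m \<alpha>}.
              ((1/2 + 1 / of_nat m :: complex) gchoose (abs_idx m \<alpha>)) *
              fact (abs_idx m \<alpha>) / fact_idx m \<alpha> * pow_idx m (\<lambda>i. ecoef m l i a) \<alpha>)
         + (\<Sum>r\<in>{2..j-2}. dcoef m l r a / D0 m l *
              (\<Sum>\<alpha>\<in>multi_idx m (j - r).
                 ((1/2 + (1 - of_nat r) / of_nat m :: complex) gchoose (abs_idx m \<alpha>)) *
                 fact (abs_idx m \<alpha>) / fact_idx m \<alpha> * pow_idx m (\<lambda>i. ecoef m l i a) \<alpha>))"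

lemma ecoef_eq:
  assumes "2 \<le> j"
  shows "ecoef m l j a = - (2 * of_nat m / (of_nat m + 2)) * (dcoef m l j a / D0 m l + Rt m l j a)"
proof -
  obtain n where n: "j = Suc n" using assms by (cases j) auto
  have S1: "(\<Sum>\<alpha>\<in>{\<alpha>\<in>multi_idx m j. 2 \<le> abs_idx m \<alpha>}.
              ((1/2 + 1 / of_nat m :: complex) gchoose (abs_idx m \<alpha>)) *
              fact (abs_idx m \<alpha>) / fact_idx m \<alpha> * pow_idx m (etab m l a n) \<alpha>) =
       (\<Sum>\<alpha>\<in>{\<alpha>\<in>multi_idx m j. 2 \<le> abs_idx m \<alpha>}.
              ((1/2 + 1 / of_nat m :: complex) gchoose (abs_idx m \<alpha>)) *
              fact (abs_idx m \<alpha>) / fact_idx m \<alpha> * pow_idx m (\<lambda>i. ecoef m l i a) \<alpha>)"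
  proof (rule sum.cong[OF refl])
    fix \<alpha> assume "\<alpha> \<in> {\<alpha>\<in>multi_idx m j. 2 \<le> abs_idx m \<alpha>}"
    then have "pow_idx m (etab m l a n) \<alpha> = pow_idx m (\<lambda>i. ecoef m l i a) \<alpha>"
      using supp1[of \<alpha> m j] n by (intro pow_etab) auto
    then show "((1/2 + 1 / of_nat m :: complex) gchoose (abs_idx m \<alpha>)) *
              fact (abs_idx m \<alpha>) / fact_idx m \<alpha> * pow_idx m (etab m l a n) \<alpha> =
          ((1/2 + 1 / of_nat m :: complex) gchoose (abs_idx m \<alpha>)) *
              fact (abs_idx m \<alpha>) / fact_idx m \<alpha> * pow_idx m (\<lambda>i. ecoef m l i a) \<alpha>" by simp
  qed
  have S2: "(\<Sum>r\<in>{2..j-2}. dcoef m l r a / dcoef m l 0 a *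
              (\<Sum>\<alpha>\<in>multi_idx m (j - r).
                 ((1/2 + (1 - of_nat r) / of_nat m :: complex) gchoose (abs_idx m \<alpha>)) *
                 fact (abs_idx m \<alpha>) / fact_idx m \<alpha> * pow_idx m (etab m l a n) \<alpha>)) =
      (\<Sum>r\<in>{2..j-2}. dcoef m l r a / D0 m l *
              (\<Sum>\<alpha>\<in>multi_idx m (j - r).
                 ((1/2 + (1 - of_nat r) / of_nat m :: complex) gchoose (abs_idx m \<alpha>)) *
                 fact (abs_idx m \<alpha>) / fact_idx m \<alpha> * pow_idx m (\<lambda>i. ecoef m l i a) \<alpha>))"
  proof (rule sum.cong[OF refl])
    fix r assume r: "r \<in> {2..j-2}"
    have "pow_idx m (etab m l a n) \<alpha> = pow_idx m (\<lambda>i. ecoef m l i a) \<alpha>" if "\<alpha> \<in> multi_idx m (j - r)" for \<alpha>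
      using supp2[OF that, of i] r n by (intro pow_etab) (use supp2[OF that] in auto)
    then show "dcoef m l r a / dcoef m l 0 a *
              (\<Sum>\<alpha>\<in>multi_idx m (j - r).
                 ((1/2 + (1 - of_nat r) / of_nat m :: complex) gchoose (abs_idx m \<alpha>)) *
                 fact (abs_idx m \<alpha>) / fact_idx m \<alpha> * pow_idx m (etab m l a n) \<alpha>) =
          dcoef m l r a / D0 m l *
              (\<Sum>\<alpha>\<in>multi_idx m (j - r).
                 ((1/2 + (1 - of_nat r) / of_nat m :: complex) gchoose (abs_idx m \<alpha>)) *
                 fact (abs_idx m \<alpha>) / fact_idx m \<alpha> * pow_idx m (\<lambda>i. ecoef m l i a) \<alpha>)"
      by (simp add: dcoef0 cong: sum.cong)
  qed
  have "ecoef m l j a = estep m l a (etab m l a n) j" by (simp add: ecoef_def n)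
  also have "\<dots> = - (2 * of_nat m / (of_nat m + 2)) * (dcoef m l j a / dcoef m l 0 a + Rt m l j a)"
  proof -
    have nj: "\<not> j < 2" using assms by simp
    show ?thesis unfolding estep_def if_not_P[OF nj] Rt_def S1 S2 by (simp only: add.assoc)
  qed
  finally show ?thesis by (simp add: dcoef0)
qed

lemma Rt_poly:
  assumes IH: "\<And>i. i < j \<Longrightarrow> poly_in {1..i} (ecoef m l i)"
  shows "poly_in {1..j-1} (Rt m l j)"
proof -
  have P: "poly_in {1..j-1} (\<lambda>a. pow_idx m (\<lambda>i. ecoef m l i a) \<alpha>)"
    if "\<And>i. \<alpha> i \<noteq> 0 \<Longrightarrow> i \<le> j - 1" for \<alpha>
  proof (rule pow_idx_poly)
    fix i assume "\<alpha> i \<noteq> 0"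
    then have i: "i \<le> j - 1" using that by blast
    then have "i < j \<or> i = 0" by auto
    then show "poly_in {1..j-1} (ecoef m l i)"
    proof
      assume "i < j" then show ?thesis using IH i by (rule_tac poly_in_mono[where S="{1..i}"]) auto
    next
      assume "i = 0"
      then have "ecoef m l i = (\<lambda>a. 0)" by (simp add: ecoef_def fun_eq_iff)
      then show ?thesis by (simp add: poly_in_const)
    qed
  qed
  show ?thesis unfolding Rt_def
  proof (rule poly_in_add; rule poly_in_sum)
    fix \<alpha> assume "\<alpha> \<in> {\<alpha>\<in>multi_idx m j. 2 \<le> abs_idx m \<alpha>}"
    then show "poly_in {1..j-1} (\<lambda>a. ((1/2 + 1 / of_nat m :: complex) gchoose (abs_idx m \<alpha>)) *
              fact (abs_idx m \<alpha>) / fact_idx m \<alpha> * pow_idx m (\<lambda>i. ecoef m l i a) \<alpha>)"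
      using supp1[of \<alpha> m j] by (intro poly_in_cmult P) auto
  next
    fix r assume r: "r \<in> {2..j-2}"
    have d: "poly_in {1..j-1} (\<lambda>a. dcoef m l r a / D0 m l)"
      using r by (rule_tac poly_in_divc, rule_tac poly_in_mono[OF dcoef_poly]) auto
    have s: "poly_in {1..j-1} (\<lambda>a. \<Sum>\<alpha>\<in>multi_idx m (j - r).
                 ((1/2 + (1 - of_nat r) / of_nat m :: complex) gchoose (abs_idx m \<alpha>)) *
                 fact (abs_idx m \<alpha>) / fact_idx m \<alpha> * pow_idx m (\<lambda>i. ecoef m l i a) \<alpha>)"
    proof (intro poly_in_sum poly_in_cmult P)
      fix \<alpha> i assume "\<alpha> \<in> multi_idx m (j - r)" "\<alpha> i \<noteq> 0"
      then show "i \<le> j - 1" using supp2 r by auto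
    qed
    show "poly_in {1..j-1} (\<lambda>a. dcoef m l r a / D0 m l *
              (\<Sum>\<alpha>\<in>multi_idx m (j - r).
                 ((1/2 + (1 - of_nat r) / of_nat m :: complex) gchoose (abs_idx m \<alpha>)) *
                 fact (abs_idx m \<alpha>) / fact_idx m \<alpha> * pow_idx m (\<lambda>i. ecoef m l i a) \<alpha>))"
      by (rule poly_in_mult[OF d s])
  qed
qed

lemma ecoef_poly: "poly_in {1..j} (ecoef m l j)"
proof (induction j rule: less_induct)
  case (less j)
  show ?case
  proof (cases "j < 2")
    case True
    then have "ecoef m l j = (\<lambda>a. 0)" using ecoef_small by auto
    then show ?thesis by (simp add: poly_in_const)
  next
    case False
    then have e: "ecoef m l j = (\<lambda>a. - (2 * of_nat m / (of_nat m + 2)) * (dcoef m l j a / D0 m l + Rt m l j a))"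
      using ecoef_eq by auto
    have "poly_in {1..j} (Rt m l j)" by (rule poly_in_mono[OF Rt_poly[OF less]]) auto
    then show ?thesis unfolding e by (intro poly_in_cmult poly_in_add poly_in_divc dcoef_poly)
  qed
qed



theorem corollary5:
  fixes m l j :: nat
  assumes "m \<ge> 3" and "1 \<le> l" and "l \<le> m - 1" and "1 \<le> j" and "2 * j \<le> m + 2"
  shows "poly_in {1..j} (dcoef m l j) \<and> poly_in {1..j} (ecoef m l j)
    \<and> (\<forall>i\<in>{j+1..m-1}. indep_of i (dcoef m l j) \<and> indep_of i (ecoef m l j))
    \<and> (m dvd (j - 1) * l \<longrightarrow> (\<forall>a. dcoef m l j a = 0) \<and> indep_of j (ecoef m l j))
    \<and> (\<not> m dvd (j - 1) * l \<longrightarrow> lin_in j (dcoef m l j) \<and> lin_in j (ecoef m l j))"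
proof (intro conjI impI ballI allI)
  show dp: "poly_in {1..j} (dcoef m l j)" by (rule dcoef_poly)
  show ep: "poly_in {1..j} (ecoef m l j)" by (rule ecoef_poly)
  fix i assume "i \<in> {j+1..m-1}"
  then have "i \<notin> {1..j}" by simp
  then show "indep_of i (dcoef m l j)" "indep_of i (ecoef m l j)"
    using poly_in_indep dp ep by blast+
next
  define K where "K = - (2 * of_nat m / (of_nat m + 2 :: complex))"
  have "(of_nat (m + 2) :: complex) \<noteq> 0" by (simp only: of_nat_eq_0_iff)
  then have m2: "(of_nat m + 2 :: complex) \<noteq> 0" by (simp add: add.commute)
  have K: "K \<noteq> 0" unfolding K_def using assms(1) m2 by simp
  have D: "D0 m l \<noteq> 0" using D0_nz assms by simp
  have Rind: "indep_of j (Rt m l j)"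
    by (rule poly_in_indep[OF Rt_poly[OF ecoef_poly]]) (use assms(4) in auto)
  have ee: "2 \<le> j \<Longrightarrow> ecoef m l j a = K * (dcoef m l j a / D0 m l + Rt m l j a)" for a
    unfolding K_def by (rule ecoef_eq)
  {
    assume dv: "m dvd (j - 1) * l"
    fix a show "dcoef m l j a = 0" by (rule dcoef_dvd[OF assms(1,4,5) dv])
  next
    assume dv: "m dvd (j - 1) * l"
    show "indep_of j (ecoef m l j)"
    proof (cases "j < 2")
      case True then show ?thesis unfolding indep_of_def using ecoef_small by simp
    next
      case False
      then show ?thesis using Rind ee dcoef_dvd[OF assms(1,4,5) dv] unfolding indep_of_def by simp
    qed
  next
    assume dv: "\<not> m dvd (j - 1) * l"
    show "lin_in j (dcoef m l j)" by (rule dcoef_lin[OF assms(1,4,5) dv])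
  next
    assume dv: "\<not> m dvd (j - 1) * l"
    have j2: "2 \<le> j" using assms dv by (cases "j = 1") auto
    obtain c g where cg: "c \<noteq> 0" "indep_of j g" "\<forall>a. dcoef m l j a = c * a j + g a"
      using dcoef_lin[OF assms(1,4,5) dv] unfolding lin_in_def by blast
    show "lin_in j (ecoef m l j)" unfolding lin_in_def
    proof (intro exI conjI allI)
      show "K * c / D0 m l \<noteq> 0" using K D cg(1) by simp
      show "indep_of j (\<lambda>a. K * (g a / D0 m l + Rt m l j a))"
        using cg(2) Rind unfolding indep_of_def by simp
      fix a show "ecoef m l j a = K * c / D0 m l * a j + K * (g a / D0 m l + Rt m l j a)"
        unfolding ee[OF j2] cg(3)[rule_format] by (simp add: algebra_simps add_divide_distrib)
    qed
  }
qed

end
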